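(* Consider the power network system described in the context, and let the switching vector $\sigma$ be held at an arbitrary constant value in $\{0,1\}^{|\tilde{\mathcal L}|}$. Then every equilibrium $(\eta^*,\omega^*,p^{M,*},p^{c,*},\psi^* )$ of the system satisfies $\omega^*=\mathbf 0_{|\mathcal N|}$ and $p^{c,*}\in\operatorname{Im}(\mathbf 1_{|\mathcal N|})$, i.e. $p^{c,*}_1=\dots=p^{c,*}_{|\mathcal N|}$.
   Context: Let $(\mathcal N,\mathcal E)$ be a connected directed graph (the power network) with bus set $\mathcal N=\{1,\dots,|\mathcal N|\}$ and line set $\mathcal E\subseteq\mathcal N\times\mathcal N$, oriented arbitrarily so that $(i,j)\in\mathcal E$ implies $(j,i)\notin\mathcal E$; write $\mathcal N^p_j=\{k:(k,j)\in\mathcal E\}$ and $\mathcal N^s_j=\{k:(j,k)\in\mathcal E\}$. Let $(\mathcal N,\tilde{\mathcal E})$ be a connected directed graph (the communication network) on the same vertex set. For each $j\in\mathcal N$ let $\mathcal L_j$ be a finite set of on-off loads at bus $j$ and $\tilde{\mathcal L}=\{(l,j): l\in\mathcal L_j,\ j\in\mathcal N\}$; each load $(l,j)$ has magnitude $\overline d_{l,j}>0$ and switching state $\sigma_{l,j}\in\{0,1\}$. Constants: $M_j,\gamma_j,\kappa_j,A_j,\tau_j>0$ and $p^L_j\in\mathbb R$ for $j\in\mathcal N$; $B_{ij}>0$ for $(i,j)\in\mathcal E$; $\tau_{ij}>0$ for $(i,j)\in\tilde{\mathcal E}$. The state is $x=(\eta,\omega,p^M,p^c,\psi)$ with $\eta=(\eta_{ij})_{(i,j)\in\mathcal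 E}$, $\omega,p^M,p^c\in\mathbb R^{|\mathcal N|}$, $\psi=(\psi_{ij})_{(i,j)\in\tilde{\mathcal E}}$, and the dynamics are $\dot\eta_{ij}=\omega_i-\omega_j$ for $(i,j)\in\mathcal E$; $M_j\dot\omega_j=p^M_j-p^L_j-d^u_j-\sum_{l\in\mathcal L_j}d^c_{l,j}-\sum_{k\in\mathcal N^s_j}p_{jk}+\sum_{i\in\mathcal N^p_j}p_{ij}$ for $j\in\mathcal N$; $p_{ij}=B_{ij}\eta_{ij}$; $\gamma_j\dot p^M_j=-(p^M_j+\kappa_j\omega_j-\kappa_jp^c_j)$; $d^u_j=A_j\omega_j$; $d^c_{l,j}=\overline d_{l,j}\sigma_{l,j}$; $\tau_{ij}\dot\psi_{ij}=p^c_i-p^c_j$ for $(i,j)\in\tilde{\mathcal E}$; $\tau_j\dot p^c_j=-p^M_j+p^L_j+\sum_{l\in\mathcal L_j}d^c_{l,j}-\sum_{k:(j,k)\in\tilde{\mathcal E}}\psi_{jk}+\sum_{i:(i,j)\in\tilde{\mathcal E}}\psi_{ij}$ for $j\in\mathcal N$. An equilibrium (for fixed $\sigma$) is a state at which all time derivatives vanish. *)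

theory Defs
  imports Complex_Main
begin

definition weakly_connected :: "'n set \<Rightarrow> ('n \<times> 'n) set \<Rightarrow> bool" where
  "weakly_connected V E \<longleftrightarrow> E \<subseteq> V \<times> V \<and> (\<forall>i\<in>V. \<forall>j\<in>V. (i, j) \<in> (E \<union> E\<inverse>)\<^sup>*)"

text \<open>The vector field of the power network with state
  (eta, omega, pM, pc, psi) and fixed switching state sigma.
  Each component returns the time derivative of the corresponding state variable.\<close>

definition d_eta :: "('n \<Rightarrow> real) \<Rightarrow> 'n \<Rightarrow> 'n \<Rightarrow> real" where
  "d_eta \<omega> i j = \<omega> i - \<omega> j"

definition d_omega ::
  "('n \<times> 'n) set \<Rightarrow> ('n \<Rightarrow> 'l set) \<Rightarrow> ('n \<Rightarrow> real) \<Rightarrow> ('n \<Rightarrow> real) \<Rightarrow> ('n \<Rightarrow> real)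
   \<Rightarrow> ('n \<times> 'n \<Rightarrow> real) \<Rightarrow> ('l \<Rightarrow> 'n \<Rightarrow> real) \<Rightarrow> ('l \<Rightarrow> 'n \<Rightarrow> real)
   \<Rightarrow> ('n \<times> 'n \<Rightarrow> real) \<Rightarrow> ('n \<Rightarrow> real) \<Rightarrow> ('n \<Rightarrow> real) \<Rightarrow> 'n \<Rightarrow> real" where
  "d_omega E L M pL A B dbar \<sigma> \<eta> \<omega> pM j =
     (pM j - pL j - A j * \<omega> j - (\<Sum>l\<in>L j. dbar l j * \<sigma> l j)
      - (\<Sum>k\<in>{k. (j, k) \<in> E}. B (j, k) * \<eta> (j, k))
      + (\<Sum>i\<in>{i. (i, j) \<in> E}. B (i, j) * \<eta> (i, j))) / M j"

definition d_pM :: "('n \<Rightarrow> real) \<Rightarrow> ('n \<Rightarrow> real) \<Rightarrow> ('n \<Rightarrow> real) \<Rightarrow> ('n \<Rightarrow> real)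
   \<Rightarrow> ('n \<Rightarrow> real) \<Rightarrow> 'n \<Rightarrow> real" where
  "d_pM \<gamma> \<kappa> \<omega> pM pc j = - (pM j + \<kappa> j * \<omega> j - \<kappa> j * pc j) / \<gamma> j"

definition d_psi :: "('n \<times> 'n \<Rightarrow> real) \<Rightarrow> ('n \<Rightarrow> real) \<Rightarrow> 'n \<Rightarrow> 'n \<Rightarrow> real" where
  "d_psi \<tau>e pc i j = (pc i - pc j) / \<tau>e (i, j)"

definition d_pc ::
  "('n \<times> 'n) set \<Rightarrow> ('n \<Rightarrow> 'l set) \<Rightarrow> ('n \<Rightarrow> real) \<Rightarrow> ('n \<Rightarrow> real)
   \<Rightarrow> ('l \<Rightarrow> 'n \<Rightarrow> real) \<Rightarrow> ('l \<Rightarrow> 'n \<Rightarrow> real)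
   \<Rightarrow> ('n \<Rightarrow> real) \<Rightarrow> ('n \<times> 'n \<Rightarrow> real) \<Rightarrow> 'n \<Rightarrow> real" where
  "d_pc Et L \<tau> pL dbar \<sigma> pM \<psi> j =
     (- pM j + pL j + (\<Sum>l\<in>L j. dbar l j * \<sigma> l j)
      - (\<Sum>k\<in>{k. (j, k) \<in> Et}. \<psi> (j, k))
      + (\<Sum>i\<in>{i. (i, j) \<in> Et}. \<psi> (i, j))) / \<tau> j"

definition is_equilibrium ::
  "'n set \<Rightarrow> ('n \<times> 'n) set \<Rightarrow> ('n \<times> 'n) set \<Rightarrow> ('n \<Rightarrow> 'l set)
   \<Rightarrow> ('n \<Rightarrow> real) \<Rightarrow> ('n \<Rightarrow> real) \<Rightarrow> ('n \<Rightarrow> real) \<Rightarrow> ('n \<Rightarrow> real) \<Rightarrow> ('n \<Rightarrow> real)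
   \<Rightarrow> ('n \<Rightarrow> real) \<Rightarrow> ('n \<times> 'n \<Rightarrow> real) \<Rightarrow> ('n \<times> 'n \<Rightarrow> real)
   \<Rightarrow> ('l \<Rightarrow> 'n \<Rightarrow> real) \<Rightarrow> ('l \<Rightarrow> 'n \<Rightarrow> real)
   \<Rightarrow> ('n \<times> 'n \<Rightarrow> real) \<Rightarrow> ('n \<Rightarrow> real) \<Rightarrow> ('n \<Rightarrow> real) \<Rightarrow> ('n \<Rightarrow> real)
   \<Rightarrow> ('n \<times> 'n \<Rightarrow> real) \<Rightarrow> bool" where
  "is_equilibrium N E Et L M \<gamma> \<kappa> A \<tau> pL B \<tau>e dbar \<sigma> \<eta> \<omega> pM pc \<psi> \<longleftrightarrow>
     (\<forall>(i, j)\<in>E. d_eta \<omega> i j = 0) \<and>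
     (\<forall>j\<in>N. d_omega E L M pL A B dbar \<sigma> \<eta> \<omega> pM j = 0) \<and>
     (\<forall>j\<in>N. d_pM \<gamma> \<kappa> \<omega> pM pc j = 0) \<and>
     (\<forall>(i, j)\<in>Et. d_psi \<tau>e pc i j = 0) \<and>
     (\<forall>j\<in>N. d_pc Et L \<tau> pL dbar \<sigma> pM \<psi> j = 0)"

end

theory Submission
  imports Defs
begin

lemma const_on_conn:
  assumes "weakly_connected N E" and "\<And>i j. (i, j) \<in> E \<Longrightarrow> f i = f j"
    and "i \<in> N" "j \<in> N"
  shows "f i = (f j :: real)"
proof -
  have "(i, j) \<in> (E \<union> E\<inverse>)\<^sup>*" using assms(1,3,4) unfolding weakly_connected_def by blast
  then show ?thesis
  proof (induction rule: rtrancl_induct)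
    case base then show ?case by simp
  next
    case (step y z) then show ?case using assms(2) by fastforce
  qed
qed

lemma flow_swap:
  assumes fin: "finite N" and sub: "E \<subseteq> N \<times> N"
  shows "(\<Sum>j\<in>N. (\<Sum>k\<in>{k. (j, k) \<in> E}. g (j, k))) = (\<Sum>j\<in>N. (\<Sum>i\<in>{i. (i, j) \<in> E}. (g (i, j)::real)))"
proof -
  have a: "(\<Sum>k\<in>{k. (j, k) \<in> E}. g (j, k)) = (\<Sum>k\<in>N. if (j, k) \<in> E then g (j, k) else 0)" for j
  proof -
    have "{k. (j, k) \<in> E} = {k\<in>N. (j, k) \<in> E}" using sub by blast
    then show ?thesis using fin by (simp add: sum.inter_filter)
  qed
  have b: "(\<Sum>i\<in>{i. (i, j) \<in> E}. g (i, j)) = (\<Sum>i\<in>N. if (i, j) \<in> E then g (i, j) else 0)" for j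
  proof -
    have "{i. (i, j) \<in> E} = {i\<in>N. (i, j) \<in> E}" using sub by blast
    then show ?thesis using fin by (simp add: sum.inter_filter)
  qed
  show ?thesis unfolding a b by (rule sum.swap)
qed

theorem lemma1:
  fixes N :: "'n set" and E Et :: "('n \<times> 'n) set" and L :: "'n \<Rightarrow> 'l set"
    and M \<gamma> \<kappa> A \<tau> pL :: "'n \<Rightarrow> real"
    and B \<tau>e :: "'n \<times> 'n \<Rightarrow> real"
    and dbar \<sigma> :: "'l \<Rightarrow> 'n \<Rightarrow> real"
    and \<eta> \<psi> :: "'n \<times> 'n \<Rightarrow> real" and \<omega> pM pc :: "'n \<Rightarrow> real"
  assumes finN: "finite N" and neN: "N \<noteq> {}"
    and connE: "weakly_connected N E"
    and orient: "\<And>i j. (i, j) \<in> E \<Longrightarrow> (j, i) \<notin> E"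
    and connEt: "weakly_connected N Et"
    and finL: "\<And>j. j \<in> N \<Longrightarrow> finite (L j)"
    and dbar_pos: "\<And>j l. j \<in> N \<Longrightarrow> l \<in> L j \<Longrightarrow> dbar l j > 0"
    and sigma01: "\<And>j l. j \<in> N \<Longrightarrow> l \<in> L j \<Longrightarrow> \<sigma> l j \<in> {0, 1}"
    and M_pos: "\<And>j. j \<in> N \<Longrightarrow> M j > 0"
    and \<gamma>_pos: "\<And>j. j \<in> N \<Longrightarrow> \<gamma> j > 0"
    and \<kappa>_pos: "\<And>j. j \<in> N \<Longrightarrow> \<kappa> j > 0"
    and A_pos: "\<And>j. j \<in> N \<Longrightarrow> A j > 0"
    and \<tau>_pos: "\<And>j. j \<in> N \<Longrightarrow> \<tau> j > 0"
    and B_pos: "\<And>e. e \<in> E \<Longrightarrow> B e > 0"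
    and \<tau>e_pos: "\<And>e. e \<in> Et \<Longrightarrow> \<tau>e e > 0"
    and eq: "is_equilibrium N E Et L M \<gamma> \<kappa> A \<tau> pL B \<tau>e dbar \<sigma> \<eta> \<omega> pM pc \<psi>"
  shows "(\<forall>j\<in>N. \<omega> j = 0) \<and> (\<forall>i\<in>N. \<forall>j\<in>N. pc i = pc j)"
proof -
  note E = eq[unfolded is_equilibrium_def]
  have subE: "E \<subseteq> N \<times> N" and subEt: "Et \<subseteq> N \<times> N"
    using connE connEt unfolding weakly_connected_def by auto
  have pcc: "\<forall>i\<in>N. \<forall>j\<in>N. pc i = pc j"
  proof (intro ballI, rule const_on_conn[OF connEt])
    fix i j assume ij: "(i, j) \<in> Et"
    then have "(pc i - pc j) / \<tau>e (i, j) = 0" using E unfolding d_psi_def by auto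
    moreover have "\<tau>e (i, j) > 0" using \<tau>e_pos ij by auto
    ultimately show "pc i = pc j" by simp
  qed
  have wc: "\<omega> i = \<omega> j" if "i \<in> N" "j \<in> N" for i j
  proof (rule const_on_conn[OF connE _ that])
    fix i j assume "(i, j) \<in> E"
    then show "\<omega> i = \<omega> j" using E unfolding d_eta_def by auto
  qed
  define D where "D j = (\<Sum>l\<in>L j. dbar l j * \<sigma> l j)" for j
  define Fo where "Fo j = (\<Sum>k\<in>{k. (j, k) \<in> E}. B (j, k) * \<eta> (j, k))" for j
  define Fi where "Fi j = (\<Sum>i\<in>{i. (i, j) \<in> E}. B (i, j) * \<eta> (i, j))" for j
  define Po where "Po j = (\<Sum>k\<in>{k. (j, k) \<in> Et}. \<psi> (j, k))" for j
  define Pi where "Pi j = (\<Sum>i\<in>{i. (i, j) \<in> Et}. \<psi> (i, j))" for j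
  have om: "pM j - pL j - A j * \<omega> j - D j - Fo j + Fi j = 0" if "j \<in> N" for j
  proof -
    have "d_omega E L M pL A B dbar \<sigma> \<eta> \<omega> pM j = 0" using E that by auto
    then show ?thesis using M_pos[OF that] unfolding d_omega_def D_def Fo_def Fi_def by simp
  qed
  have pc: "- pM j + pL j + D j - Po j + Pi j = 0" if "j \<in> N" for j
  proof -
    have "d_pc Et L \<tau> pL dbar \<sigma> pM \<psi> j = 0" using E that by auto
    then show ?thesis using \<tau>_pos[OF that] unfolding d_pc_def D_def Po_def Pi_def by simp
  qed
  have s1: "(\<Sum>j\<in>N. Fo j) = (\<Sum>j\<in>N. Fi j)" unfolding Fo_def Fi_def
    by (rule flow_swap[OF finN subE])
  have s2: "(\<Sum>j\<in>N. Po j) = (\<Sum>j\<in>N. Pi j)" unfolding Po_def Pi_def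
    by (rule flow_swap[OF finN subEt])
  have "(\<Sum>j\<in>N. (pM j - pL j - A j * \<omega> j - D j - Fo j + Fi j) + (- pM j + pL j + D j - Po j + Pi j)) = 0"
    using om pc by simp
  moreover have "(\<Sum>j\<in>N. (pM j - pL j - A j * \<omega> j - D j - Fo j + Fi j) + (- pM j + pL j + D j - Po j + Pi j))
     = (\<Sum>j\<in>N. (Fi j - Fo j) + (Pi j - Po j) - A j * \<omega> j)"
    by (rule sum.cong) auto
  moreover have "(\<Sum>j\<in>N. (Fi j - Fo j) + (Pi j - Po j) - A j * \<omega> j)
     = ((\<Sum>j\<in>N. Fi j) - (\<Sum>j\<in>N. Fo j)) + ((\<Sum>j\<in>N. Pi j) - (\<Sum>j\<in>N. Po j)) - (\<Sum>j\<in>N. A j * \<omega> j)"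
    by (simp only: sum.distrib sum_subtractf)
  ultimately have "(\<Sum>j\<in>N. A j * \<omega> j) = 0"
    using s1 s2 by linarith
  obtain j0 where j0: "j0 \<in> N" using neN by blast
  have "(\<Sum>j\<in>N. A j * \<omega> j) = (\<Sum>j\<in>N. A j) * \<omega> j0"
  proof -
    have "(\<Sum>j\<in>N. A j * \<omega> j) = (\<Sum>j\<in>N. A j * \<omega> j0)"
      using wc[OF _ j0] by (intro sum.cong) auto
    then show ?thesis by (simp add: sum_distrib_right)
  qed
  moreover have "(\<Sum>j\<in>N. A j) > 0" using A_pos finN neN by (simp add: sum_pos)
  ultimately have "\<omega> j0 = 0" using \<open>(\<Sum>j\<in>N. A j * \<omega> j) = 0\<close> by simp
  then have "\<forall>j\<in>N. \<omega> j = 0" using wc[OF _ j0] by simp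
  with pcc show ?thesis by blast
qed

end
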